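(* There exist a residual subset $P_0\subseteq\mathbb{T}$ and a subset $G\subseteq\mathbb{T}$ of full Lebesgue measure such that for every $\alpha\in P_0$ and every $\beta\in G$, the sequence $\{\alpha n^3+\beta n^2\}_{n\ge0}$ in $\mathbb{T}$ has the repetition property.
   Context: $\mathbb{T}=\mathbb{R}/\mathbb{Z}$ with metric $\mathrm{dist}(x,y)=\langle x-y\rangle$, where $\langle\tau\rangle=\min\{|\hat\tau-p|:p\in\mathbb{Z}\}$ for any representative $\hat\tau\in\mathbb{R}$ of $\tau$; for $\alpha,\beta\in\mathbb{T}$ and integer $n$, $\alpha n^3+\beta n^2$ is a well-defined element of $\mathbb{T}$. $\mathbb{Z}_+=\{1,2,\ldots\}$. A sequence $\{\omega_n\}_{n\ge0}$ in a metric space $\Omega$ has the repetition property if for every $\varepsilon>0$ and $r \in \mathbb{Z}_+$ there exists $q \in \mathbb{Z}_+$ such that $\mathrm{dist}(\omega_n,\omega_{n+q}) < \varepsilon$ for $n = 0,1,\ldots, rq$. *)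

theory Defs
  imports "HOL-Analysis.Analysis"
begin

text \<open>The circle T = R/Z is represented through real representatives.
  A subset of T is represented by its preimage in R, i.e. a 1-periodic set of reals.\<close>

definition tnorm :: "real \<Rightarrow> real" where
  "tnorm t = (INF p::int. \<bar>t - of_int p\<bar>)"

definition tdist :: "real \<Rightarrow> real \<Rightarrow> real" where
  "tdist x y = tnorm (x - y)"

definition periodic_set :: "real set \<Rightarrow> bool" where
  "periodic_set S \<longleftrightarrow> (\<forall>x. x \<in> S \<longleftrightarrow> x + 1 \<in> S)"

definition nowhere_dense :: "real set \<Rightarrow> bool" where
  "nowhere_dense S \<longleftrightarrow> interior (closure S) = {}"

definition meagre :: "real set \<Rightarrow> bool" where
  "meagre S \<longleftrightarrow> (\<exists>F :: nat \<Rightarrow> real set. (\<forall>n. nowhere_dense (F n)) \<and> S \<subseteq> (\<Union>n. F n))"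

definition residual :: "real set \<Rightarrow> bool" where
  "residual S \<longleftrightarrow> meagre (UNIV - S)"

definition repetition_property :: "('a \<Rightarrow> 'a \<Rightarrow> real) \<Rightarrow> (nat \<Rightarrow> 'a) \<Rightarrow> bool" where
  "repetition_property d \<omega> \<longleftrightarrow>
     (\<forall>\<epsilon>>0. \<forall>r::nat. r \<ge> 1 \<longrightarrow>
        (\<exists>q::nat. q \<ge> 1 \<and> (\<forall>n\<le>r * q. d (\<omega> n) (\<omega> (n + q)) < \<epsilon>)))"

end

theory Submission
  imports Defs "HOL-Analysis.Kronecker_Approximation_Theorem"
begin

lemma density_null:
  fixes S :: "real set" and \<kappa> :: real
  assumes S: "S \<in> lmeasurable" and k: "\<kappa> > 0"
  and hole: "\<And>x d. x \<in> S \<Longrightarrow> d > 0 \<Longrightarrow> \<exists>\<rho>. 0 < \<rho> \<and> \<rho> < d \<and>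
     ennreal \<kappa> * emeasure lebesgue (ball x \<rho>) \<le> emeasure lebesgue (ball x \<rho> - S)"
  shows "S \<in> null_sets lebesgue"
proof (rule ccontr)
  assume nn: "S \<notin> null_sets lebesgue"
  define s where "s = measure lebesgue S"
  have Ss: "emeasure lebesgue S = ennreal s" using S s_def
    by (simp add: emeasure_eq_measure2)
  have spos: "s > 0"
  proof -
    have "s \<noteq> 0"
    proof
      assume "s = 0"
      then have "emeasure lebesgue S = 0" using Ss by simp
      then show False using nn S by (auto simp: null_sets_def fmeasurableD)
    qed
    moreover have "s \<ge> 0" unfolding s_def by (rule measure_nonneg)
    ultimately show ?thesis by linarith
  qed
  have S1: "S \<in> sets lebesgue" using S by (rule fmeasurableD)
  have ks: "\<kappa> * s > 0" using k spos by simp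
  obtain T where T: "open T" "S \<subseteq> T" "(T - S) \<in> lmeasurable" "emeasure lebesgue (T - S) < ennreal (\<kappa> * s)"
    using sets_lebesgue_outer_open[OF S1 ks] by metis
  define K where "K = {(x,\<rho>). 0 < \<rho> \<and> ball x \<rho> \<subseteq> T \<and>
     ennreal \<kappa> * emeasure lebesgue (ball x \<rho>) \<le> emeasure lebesgue (ball x \<rho> - S)}"
  have cov: "\<exists>i. i \<in> K \<and> x \<in> ball (fst i) (snd i) \<and> snd i < d" if xS: "x \<in> S" and d0: "d > 0" for x d
  proof -
    have "x \<in> T" using T(2) xS by blast
    then obtain e where e: "e > 0" "ball x e \<subseteq> T" using T(1) open_contains_ball_eq by blast
    obtain \<rho> where r: "0 < \<rho>" "\<rho> < min d e"
      "ennreal \<kappa> * emeasure lebesgue (ball x \<rho>) \<le> emeasure lebesgue (ball x \<rho> - S)"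
    proof -
      have "min d e > 0" using d0 e by simp
      from hole[OF xS this] show thesis using that by blast
    qed
    have "\<rho> \<le> e" using r by simp
    then have "ball x \<rho> \<subseteq> ball x e" by (rule subset_ball)
    then have "ball x \<rho> \<subseteq> T" using e by blast
    then have "(x,\<rho>) \<in> K" using r unfolding K_def by blast
    moreover have "x \<in> ball x \<rho>" using r by simp
    ultimately show ?thesis using r by (intro exI[of _ "(x,\<rho>)"]) simp
  qed
  obtain C where C: "countable C" "C \<subseteq> K"
     "pairwise (\<lambda>i j. disjnt (ball (fst i) (snd i)) (ball (fst j) (snd j))) C"
     "negligible(S - (\<Union>i \<in> C. ball (fst i) (snd i)))"
    using Vitali_covering_theorem_balls[of S K fst snd] cov by blast
  define B where "B = (\<Union>i \<in> C. ball (fst i) (snd i))"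
  have BT: "B \<subseteq> T" unfolding B_def
  proof (rule UN_least)
    fix i assume "i \<in> C"
    then have "i \<in> K" using C(2) by blast
    then show "ball (fst i) (snd i) \<subseteq> T" unfolding K_def by (cases i) auto
  qed
  have "open B" unfolding B_def by auto
  then have "B \<in> sets borel" by (rule borel_open)
  then have Bs: "B \<in> sets lebesgue" by (metis sets_completionI_sets sets_lborel)
  have disj: "disjoint_family_on (\<lambda>i. ball (fst i) (snd i)) C"
    using C(3) unfolding disjoint_family_on_def pairwise_def disjnt_def by blast
  have disj2: "disjoint_family_on (\<lambda>i. ball (fst i) (snd i) - S) C"
    using disj unfolding disjoint_family_on_def by blast
  have e1: "emeasure lebesgue B = (\<integral>\<^sup>+i. emeasure lebesgue (ball (fst i) (snd i)) \<partial>count_space C)"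
    unfolding B_def by (rule emeasure_UN_countable) (use C disj in auto)
  have BS: "B - S = (\<Union>i \<in> C. ball (fst i) (snd i) - S)" unfolding B_def by blast
  have e2: "emeasure lebesgue (B - S) = (\<integral>\<^sup>+i. emeasure lebesgue (ball (fst i) (snd i) - S) \<partial>count_space C)"
    unfolding BS by (rule emeasure_UN_countable) (use C disj2 S in \<open>auto simp: fmeasurableD\<close>)
  have "ennreal \<kappa> * emeasure lebesgue B = (\<integral>\<^sup>+i. ennreal \<kappa> * emeasure lebesgue (ball (fst i) (snd i)) \<partial>count_space C)"
    unfolding e1 by (simp add: nn_integral_cmult)
  also have "\<dots> \<le> emeasure lebesgue (B - S)"
    unfolding e2 using C(2) by (intro nn_integral_mono) (auto simp: K_def)
  also have "\<dots> \<le> emeasure lebesgue (T - S)"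
  proof (rule emeasure_mono)
    show "B - S \<subseteq> T - S" using BT by blast
  qed (use T in \<open>auto simp: fmeasurableD\<close>)
  also have "\<dots> < ennreal (\<kappa> * s)" by (rule T(4))
  finally have lt: "ennreal \<kappa> * emeasure lebesgue B < ennreal (\<kappa> * s)" .
  have "emeasure lebesgue S \<le> emeasure lebesgue (B \<union> (S - B))"
    by (rule emeasure_mono) (use Bs S1 in auto)
  also have "\<dots> = emeasure lebesgue B"
  proof -
    have "S - B \<in> null_sets lebesgue" using C(4) unfolding B_def
      by (simp add: negligible_iff_null_sets)
    then show ?thesis by (rule emeasure_Un_null_set[OF Bs])
  qed
  finally have "ennreal s \<le> emeasure lebesgue B" using Ss by simp
  then have "ennreal \<kappa> * ennreal s \<le> ennreal \<kappa> * emeasure lebesgue B"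
    by (simp add: mult_left_mono)
  with lt k spos show False by (simp add: ennreal_mult)
qed


definition Bad :: "real \<Rightarrow> nat \<Rightarrow> real set" where
  "Bad c d = {x. \<forall>j::nat. 1 \<le> j \<longrightarrow> (\<forall>p::int. c / real j \<le> \<bar>real j * real d * x - of_int p\<bar>)}"

lemma closed_Bad: "closed (Bad c d)"
proof -
  have "Bad c d = (\<Inter>j\<in>{1..}. \<Inter>p. {x. c / real j \<le> \<bar>real j * real d * x - of_int p\<bar>})"
    unfolding Bad_def by auto
  moreover have "closed {x::real. c / real j \<le> \<bar>real j * real d * x - of_int p\<bar>}" for j p
    by (intro closed_Collect_le continuous_intros)
  ultimately show ?thesis by (simp add: closed_INT)
qed

lemma emeasure_ball_lborel: "r \<ge> 0 \<Longrightarrow> emeasure lborel (ball (x::real) r) = ennreal (2 * r)"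
  by (simp add: ball_eq_greaterThanLessThan)

lemma emeasure_ball_real: "r \<ge> 0 \<Longrightarrow> emeasure lebesgue (ball (x::real) r) = ennreal (2 * r)"
  by (simp add: ball_eq_greaterThanLessThan)

lemma hole_Bad:
  assumes c: "0 < c" "c \<le> 1" and d: "d \<ge> 1" and e: "e > 0"
  shows "\<exists>\<rho>. 0 < \<rho> \<and> \<rho> < e \<and>
     ennreal (c/2) * emeasure lebesgue (ball x \<rho>) \<le> emeasure lebesgue (ball x \<rho> - Bad c d)"
proof -
  obtain Q :: nat where Q: "2/e < real Q" using reals_Archimedean2 by blast
  have "2/e > 0" using e by simp
  then have Qpos: "real Q > 0" using Q by linarith
  then have "Q > 0" by simp
  obtain h k where k: "0 < k" "k \<le> int Q" "\<bar>of_int k * (real d * x) - of_int h\<bar> < 1/Q"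
    using Dirichlet_approx[OF \<open>Q > 0\<close>] by blast
  define q where "q = real_of_int k"
  have q1: "q \<ge> 1" using k unfolding q_def by simp
  have qQ: "q \<le> real Q" using k unfolding q_def by linarith
  have dr: "real d \<ge> 1" using d by simp
  define y0 where "y0 = of_int h / (q * real d)"
  define hr where "hr = min (c / (q^2 * real d)) (1 / (q * real d * real Q))"
  define \<rho> where "\<rho> = 2 / (q * real d * real Q)"
  have qdpos: "q * real d > 0" using q1 dr by simp
  have qdQ: "q * real d * real Q > 0" using qdpos Qpos by simp
  have y0e: "(q * real d) * y0 = of_int h" unfolding y0_def using q1 dr by simp
  have xy0: "\<bar>x - y0\<bar> < 1 / (q * real d * real Q)"
  proof -
    have "\<bar>q * real d * x - of_int h\<bar> < 1 / real Q" using k(3) unfolding q_def by (simp add: mult.assoc)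
    moreover have "q * real d * x - of_int h = (q * real d) * (x - y0)"
      using y0e by (simp add: algebra_simps)
    ultimately have "(q * real d) * \<bar>x - y0\<bar> < 1 / real Q" using qdpos q1 by (simp add: abs_mult)
    then have "(q * real d * real Q) * \<bar>x - y0\<bar> < 1" using Qpos by (simp add: field_simps)
    then show ?thesis using qdQ by (simp add: field_simps)
  qed
  have hrpos: "hr > 0" unfolding hr_def using c qdpos Qpos q1 dr by simp
  have hr1: "hr \<le> 1 / (q * real d * real Q)" unfolding hr_def by simp
  have hr2: "hr \<le> c / (q^2 * real d)" unfolding hr_def by simp
  have hrc: "hr \<ge> c / (q * real d * real Q)"
  proof -
    have "(q*real d) * q \<le> (q*real d) * real Q" using mult_left_mono[OF qQ, of "q*real d"] qdpos by simp
    then have le: "q^2 * real d \<le> q * real d * real Q" by (simp add: power2_eq_square mult.commute mult.left_commute)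
    have "q^2 * real d > 0" using q1 dr by (intro mult_pos_pos) auto
    then have "0 < (q * real d * real Q) * (q^2 * real d)" using qdQ by (rule mult_pos_pos[rotated])
    then have "c / (q * real d * real Q) \<le> c / (q^2 * real d)"
      using divide_left_mono[OF le, of c] c by simp
    moreover have "c / (q * real d * real Q) \<le> 1 / (q * real d * real Q)"
      using c qdQ by (intro divide_right_mono) auto
    ultimately show ?thesis unfolding hr_def by simp
  qed
  have rhopos: "\<rho> > 0" unfolding \<rho>_def using qdpos Qpos by simp
  have rhoe: "\<rho> < e"
  proof -
    have "1 * 1 \<le> q*real d" using mult_mono[OF q1 dr] q1 by simp
    then have "1 * real Q \<le> q * real d * real Q" using mult_right_mono[of 1 "q*real d" "real Q"] by simp
    then have le: "real Q \<le> q * real d * real Q" by simp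
    have "0 < (q * real d * real Q) * real Q" using qdQ Qpos by simp
    then have "2 / (q * real d * real Q) \<le> 2 / real Q" using divide_left_mono[OF le, of 2] by simp
    then have "\<rho> \<le> 2 / real Q" unfolding \<rho>_def .
    also have "\<dots> < e" using Q e Qpos by (simp add: field_simps)
    finally show ?thesis .
  qed
  have sub: "ball y0 hr \<subseteq> ball x \<rho> - Bad c d"
  proof
    fix y assume y: "y \<in> ball y0 hr"
    then have yy: "\<bar>y - y0\<bar> < hr" by (simp add: dist_real_def abs_minus_commute)
    have "dist x y < \<rho>" using xy0 yy hr1 unfolding \<rho>_def dist_real_def by linarith
    moreover have "y \<notin> Bad c d"
    proof
      assume "y \<in> Bad c d"
      moreover have "1 \<le> nat k" using k(1) by simp
      ultimately have "c / real (nat k) \<le> \<bar>real (nat k) * real d * y - of_int h\<bar>"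
        unfolding Bad_def by blast
      moreover have "real (nat k) = q" unfolding q_def using k(1) by simp
      ultimately have L: "c / q \<le> \<bar>q * real d * y - of_int h\<bar>" by simp
      have "q * real d * y - of_int h = (q * real d) * (y - y0)"
        using y0e by (simp add: algebra_simps)
      then have "\<bar>q * real d * y - of_int h\<bar> = (q * real d) * \<bar>y - y0\<bar>" using qdpos q1 by (simp add: abs_mult)
      also have "\<dots> < (q * real d) * (c / (q^2 * real d))"
      proof -
        have "\<bar>y - y0\<bar> < c / (q^2 * real d)" using yy hr2 by linarith
        then show ?thesis using qdpos by (rule mult_strict_left_mono)
      qed
      also have "\<dots> = c / q" using q1 dr by (simp add: power2_eq_square field_simps)
      finally show False using L by simp
    qed
    ultimately show "y \<in> ball x \<rho> - Bad c d" by simp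
  qed
  have "ennreal (c/2) * emeasure lebesgue (ball x \<rho>) = ennreal (c * \<rho>)"
    using rhopos c by (simp add: emeasure_ball_lborel ennreal_mult[symmetric])
  also have "\<dots> \<le> ennreal (2 * hr)"
  proof (rule ennreal_leI)
    have "c * \<rho> = 2 * (c / (q * real d * real Q))" unfolding \<rho>_def by simp
    then show "c * \<rho> \<le> 2 * hr" using hrc by simp
  qed
  also have "\<dots> = emeasure lebesgue (ball y0 hr)" using hrpos by (simp add: emeasure_ball_lborel)
  also have "\<dots> \<le> emeasure lebesgue (ball x \<rho> - Bad c d)"
  proof (rule emeasure_mono[OF sub])
    have "closed (Bad c d)" by (rule closed_Bad)
    then have "open (ball x \<rho> - Bad c d)" by auto
    then have "ball x \<rho> - Bad c d \<in> sets borel" by (rule borel_open)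
    then show "ball x \<rho> - Bad c d \<in> sets lebesgue" by (metis sets_completionI_sets sets_lborel)
  qed
  finally show ?thesis using rhopos rhoe by blast
qed


lemma open_diff_closed_lebesgue:
  assumes "open U" "closed V" shows "U - V \<in> sets lebesgue"
proof -
  have "open (U - V)" using assms by auto
  then have "U - V \<in> sets borel" by (rule borel_open)
  then show ?thesis by (metis sets_completionI_sets sets_lborel)
qed

lemma Bad_cball_null:
  assumes c: "0 < c" "c \<le> 1" and d: "d \<ge> 1"
  shows "Bad c d \<inter> cball 0 R \<in> null_sets lebesgue"
proof (rule density_null[where \<kappa>="c/2"])
  have "compact (Bad c d \<inter> cball 0 R)"
    by (intro closed_Int_compact closed_Bad compact_cball)
  then show "Bad c d \<inter> cball 0 R \<in> lmeasurable" by (rule lmeasurable_compact)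
  show "c/2 > 0" using c by simp
  fix x e :: real assume "x \<in> Bad c d \<inter> cball 0 R" "e > 0"
  then obtain \<rho> where r: "0 < \<rho>" "\<rho> < e"
     "ennreal (c/2) * emeasure lebesgue (ball x \<rho>) \<le> emeasure lebesgue (ball x \<rho> - Bad c d)"
    using hole_Bad[OF c d \<open>e > 0\<close>] by blast
  have "emeasure lebesgue (ball x \<rho> - Bad c d) \<le> emeasure lebesgue (ball x \<rho> - Bad c d \<inter> cball 0 R)"
  proof (rule emeasure_mono)
    show "ball x \<rho> - Bad c d \<subseteq> ball x \<rho> - Bad c d \<inter> cball 0 R" by blast
    have "closed (Bad c d \<inter> cball 0 R)" using closed_Bad by auto
    then show "ball x \<rho> - Bad c d \<inter> cball 0 R \<in> sets lebesgue"
      by (intro open_diff_closed_lebesgue) auto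
  qed
  then show "\<exists>\<rho>>0. \<rho> < e \<and> ennreal (c / 2) * emeasure lebesgue (ball x \<rho>)
             \<le> emeasure lebesgue (ball x \<rho> - Bad c d \<inter> cball 0 R)"
    using r by (meson order.trans)
qed

definition Fs :: "real \<Rightarrow> nat \<Rightarrow> real \<Rightarrow> nat \<Rightarrow> real set" where
  "Fs c d R J = {x. x \<in> cball 0 R \<and> (\<forall>j::nat. 1 \<le> j \<and> j \<le> J \<longrightarrow>
      (\<forall>p::int. c / real j \<le> \<bar>real j * real d * x - of_int p\<bar>))}"

lemma compact_Fs: "compact (Fs c d R J)"
proof -
  have eq: "Fs c d R J = cball 0 R \<inter> (\<Inter>j\<in>{1..J}. \<Inter>p. {x. c / real j \<le> \<bar>real j * real d * x - of_int p\<bar>})"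
    unfolding Fs_def by auto
  have "closed {x::real. c / real j \<le> \<bar>real j * real d * x - of_int p\<bar>}" for j p
    by (intro closed_Collect_le continuous_intros)
  then have cl: "closed (\<Inter>j\<in>{1..J}. \<Inter>p. {x::real. c / real j \<le> \<bar>real j * real d * x - of_int p\<bar>})"
    by (simp add: closed_INT)
  show ?thesis unfolding eq by (rule compact_Int_closed[OF compact_cball cl])
qed

lemma Fs_small:
  assumes c: "0 < c" "c \<le> 1" and d: "d \<ge> 1" and eps: "\<epsilon> > 0"
  shows "\<exists>J. emeasure lebesgue (Fs c d R J) < ennreal \<epsilon>"
proof -
  have meas: "Fs c d R J \<in> lmeasurable" for J by (rule lmeasurable_compact[OF compact_Fs])
  have dec: "decseq (Fs c d R)" unfolding decseq_def Fs_def by auto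
  have int: "(\<Inter>J. Fs c d R J) = Bad c d \<inter> cball 0 R"
    unfolding Fs_def Bad_def by auto
  have "(\<lambda>J. emeasure lebesgue (Fs c d R J)) \<longlonglongrightarrow> emeasure lebesgue (\<Inter>J. Fs c d R J)"
  proof (rule Lim_emeasure_decseq)
    show "range (Fs c d R) \<subseteq> sets lebesgue" using meas by (auto simp: fmeasurableD)
    show "decseq (Fs c d R)" by (rule dec)
    fix J show "emeasure lebesgue (Fs c d R J) \<noteq> \<infinity>" using meas[of J] by (auto simp: fmeasurable_def)
  qed
  moreover have "emeasure lebesgue (\<Inter>J. Fs c d R J) = 0"
    unfolding int using Bad_cball_null[OF c d, of R] by auto
  ultimately have "(\<lambda>J. emeasure lebesgue (Fs c d R J)) \<longlonglongrightarrow> 0" by simp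
  moreover have "(0::ennreal) < ennreal \<epsilon>" using eps by simp
  ultimately have "eventually (\<lambda>J. emeasure lebesgue (Fs c d R J) < ennreal \<epsilon>) sequentially"
    by (rule order_tendstoD(2))
  then show ?thesis by (meson eventually_sequentially order.refl)
qed


definition cc :: "nat \<Rightarrow> real" where "cc d = 1 / (real d)^2"

definition JJ :: "nat \<Rightarrow> nat" where
  "JJ d = (SOME J. emeasure lebesgue (Fs (cc d) d (real d) J) < ennreal ((1/2)^d))"

lemma JJ: assumes "d \<ge> 1"
  shows "emeasure lebesgue (Fs (cc d) d (real d) (JJ d)) < ennreal ((1/2)^d)"
proof -
  have "real d \<ge> 1" using assms by simp
  then have "0 < cc d" "cc d \<le> 1" unfolding cc_def by (auto simp: field_simps)
  from Fs_small[OF this assms, of "(1/2)^d" "real d"]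
  show ?thesis unfolding JJ_def by (rule someI_ex) simp
qed

definition GG :: "real set" where
  "GG = {\<beta>. \<exists>D. \<forall>d\<ge>D. \<exists>j. 1 \<le> j \<and> j \<le> JJ d \<and>
     (\<exists>p::int. \<bar>real j * real d * \<beta> - of_int p\<bar> < cc d / real j)}"

definition hh :: "nat \<Rightarrow> real" where
  "hh d = 1 / ((real d)^3 * (real (JJ d) + 1)^3)"

definition PP :: "real set" where
  "PP = {\<alpha>. \<forall>k. \<exists>d\<ge>k. d \<ge> 1 \<and> (\<exists>p::int. \<bar>real d * \<alpha> - of_int p\<bar> < hh d)}"

lemma shift_ex:
  fixes m :: nat
  shows "(\<exists>p::int. \<bar>real m * (x+1) - of_int p\<bar> < X) \<longleftrightarrow> (\<exists>p::int. \<bar>real m * x - of_int p\<bar> < X)"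
proof
  assume "\<exists>p::int. \<bar>real m * (x+1) - of_int p\<bar> < X"
  then obtain p :: int where "\<bar>real m * (x+1) - of_int p\<bar> < X" by blast
  moreover have "real m * (x+1) - of_int p = real m * x - of_int (p - int m)" by (simp add: algebra_simps)
  ultimately show "\<exists>p::int. \<bar>real m * x - of_int p\<bar> < X" by metis
next
  assume "\<exists>p::int. \<bar>real m * x - of_int p\<bar> < X"
  then obtain p :: int where "\<bar>real m * x - of_int p\<bar> < X" by blast
  moreover have "real m * x - of_int p = real m * (x+1) - of_int (p + int m)" by (simp add: algebra_simps)
  ultimately show "\<exists>p::int. \<bar>real m * (x+1) - of_int p\<bar> < X" by metis
qed

lemma periodic_GG: "periodic_set GG"
proof -
  have "(\<exists>p::int. \<bar>real j * real d * (x+1) - of_int p\<bar> < X) \<longleftrightarrow> (\<exists>p::int. \<bar>real j * real d * x - of_int p\<bar> < X)"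
    for j d :: nat and x X :: real
    using shift_ex[of "j*d" x X] by (simp add: mult.assoc)
  then show ?thesis unfolding periodic_set_def GG_def by simp
qed

lemma periodic_PP: "periodic_set PP"
proof -
  have "(\<exists>p::int. \<bar>real d * (x+1) - of_int p\<bar> < X) \<longleftrightarrow> (\<exists>p::int. \<bar>real d * x - of_int p\<bar> < X)"
    for d :: nat and x X :: real
    using shift_ex[of d x X] by simp
  then show ?thesis unfolding periodic_set_def PP_def by simp
qed

lemma hh_pos: "d \<ge> 1 \<Longrightarrow> hh d > 0"
  unfolding hh_def by (intro divide_pos_pos mult_pos_pos) auto


lemma GG_null: "UNIV - GG \<in> null_sets lebesgue"
proof -
  define A where "A d = (if d = 0 then {} else Fs (cc d) d (real d) (JJ d))" for d
  have Am: "A d \<in> lmeasurable" for d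
    unfolding A_def using lmeasurable_compact[OF compact_Fs] by auto
  have Asmall: "measure lebesgue (A d) \<le> (1/2)^d" for d
  proof (cases "d = 0")
    case True then show ?thesis unfolding A_def by simp
  next
    case False
    then have "emeasure lebesgue (A d) < ennreal ((1/2)^d)" unfolding A_def using JJ[of d] by simp
    moreover have "emeasure lebesgue (A d) = ennreal (measure lebesgue (A d))"
      using Am by (simp add: emeasure_eq_measure2)
    ultimately show ?thesis by (simp add: ennreal_less_iff)
  qed
  have "limsup A \<in> null_sets lebesgue"
  proof (rule borel_cantelli_limsup1)
    show "A n \<in> sets lebesgue" for n using Am by (auto simp: fmeasurableD)
    show "emeasure lebesgue (A n) < \<infinity>" for n using Am[of n] by (auto simp: fmeasurable_def)
    show "summable (\<lambda>n. measure lebesgue (A n))"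
    proof (rule summable_comparison_test)
      show "\<exists>N. \<forall>n\<ge>N. norm (measure lebesgue (A n)) \<le> (1/2)^n" using Asmall by auto
      show "summable (\<lambda>n. (1/2::real)^n)" by simp
    qed
  qed
  moreover have "UNIV - GG \<subseteq> limsup A"
  proof
    fix \<beta> assume "\<beta> \<in> UNIV - GG"
    then have nb: "\<forall>D. \<exists>d\<ge>D. \<forall>j. 1 \<le> j \<and> j \<le> JJ d \<longrightarrow>
        (\<forall>p::int. \<not> \<bar>real j * real d * \<beta> - of_int p\<bar> < cc d / real j)"
      unfolding GG_def by blast
    have "\<forall>n. \<exists>m\<ge>n. \<beta> \<in> A m"
    proof
      fix n :: nat
      obtain d where d: "d \<ge> max (max n 1) (nat \<lceil>\<bar>\<beta>\<bar>\<rceil>)" and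
        dd: "\<forall>j. 1 \<le> j \<and> j \<le> JJ d \<longrightarrow>
        (\<forall>p::int. \<not> \<bar>real j * real d * \<beta> - of_int p\<bar> < cc d / real j)"
        using nb by blast
      have "\<bar>\<beta>\<bar> \<le> real d" using d by linarith
      then have "\<beta> \<in> cball 0 (real d)" by simp
      moreover have "d \<noteq> 0" using d by simp
      ultimately have "\<beta> \<in> A d" unfolding A_def Fs_def using dd by (auto simp: not_less)
      then show "\<exists>m\<ge>n. \<beta> \<in> A m" using d by auto
    qed
    then show "\<beta> \<in> limsup A" unfolding limsup_INF_SUP by auto
  qed
  ultimately show ?thesis by (metis negligible_iff_null_sets negligible_subset)
qed


lemma residual_PP: "residual PP"
proof -
  define F where "F k = {\<alpha>. \<forall>d. k \<le> d \<and> 1 \<le> d \<longrightarrow> (\<forall>p::int. hh d \<le> \<bar>real d * \<alpha> - of_int p\<bar>)}" for k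
  have cover: "UNIV - PP \<subseteq> (\<Union>k. F k)"
  proof
    fix x assume "x \<in> UNIV - PP"
    then obtain k where k: "\<forall>d\<ge>k. \<not> (d \<ge> 1 \<and> (\<exists>p::int. \<bar>real d * x - of_int p\<bar> < hh d))"
      unfolding PP_def by blast
    then have "x \<in> F k" unfolding F_def by (auto simp: not_less)
    then show "x \<in> (\<Union>k. F k)" by blast
  qed
  have nd: "nowhere_dense (F k)" for k
  proof -
    have eq: "F k = (\<Inter>d\<in>{d. k \<le> d \<and> 1 \<le> d}. \<Inter>p. {\<alpha>. hh d \<le> \<bar>real d * \<alpha> - of_int p\<bar>})"
      unfolding F_def by auto
    have "closed {\<alpha>::real. hh d \<le> \<bar>real d * \<alpha> - of_int p\<bar>}" for d p
      by (intro closed_Collect_le continuous_intros)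
    then have "closed (F k)" unfolding eq by (simp add: closed_INT)
    then have cl: "closure (F k) = F k" by simp
    have "interior (F k) = {}"
    proof (rule ccontr)
      assume "interior (F k) \<noteq> {}"
      then obtain x where "x \<in> interior (F k)" by blast
      then obtain e where e: "e > 0" "ball x e \<subseteq> F k" by (meson mem_interior)
      define d where "d = nat \<lceil>1/e\<rceil> + k + 1"
      have d1: "1 \<le> d" "k \<le> d" unfolding d_def by auto
      have de: "real d > 1/e" unfolding d_def by linarith
      then have dpos: "real d > 0" using e by (smt (verit) divide_pos_pos)
      define p where "p = \<lfloor>real d * x\<rfloor>"
      define z where "z = of_int p / real d"
      have "0 \<le> real d * x - of_int p" "real d * x - of_int p < 1" unfolding p_def by linarith+
      moreover have "real d * x - of_int p = real d * (x - z)" unfolding z_def using dpos by (simp add: field_simps)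
      ultimately have "\<bar>x - z\<bar> < 1 / real d" using dpos
        by (simp add: abs_if field_simps split: if_splits)
      also have "1 / real d < e" using de e dpos by (simp add: field_simps)
      finally have "z \<in> ball x e" by (simp add: dist_real_def)
      then have "z \<in> F k" using e by blast
      then have "hh d \<le> \<bar>real d * z - of_int p\<bar>" unfolding F_def using d1 by blast
      moreover have "real d * z - of_int p = 0" unfolding z_def using dpos by simp
      ultimately show False using hh_pos[OF d1(1)] by simp
    qed
    then show ?thesis unfolding nowhere_dense_def cl .
  qed
  show ?thesis unfolding residual_def meagre_def using cover nd by blast
qed


lemma tnorm_le: "tnorm t \<le> \<bar>t - of_int z\<bar>"
  unfolding tnorm_def by (rule cINF_lower) (auto intro: bdd_belowI2[of _ 0])

lemma alpha_bound:
  fixes jj dd H a :: real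
  assumes "1 \<le> jj" "1 \<le> dd" "jj \<le> H" "a \<le> jj / (dd^3 * H^3)"
  shows "a \<le> 1 / (dd * (jj * dd)^2)"
proof -
  have "jj^3 \<le> H^3" using assms by (intro power_mono) auto
  then have le: "dd^3 * jj^3 \<le> dd^3 * H^3" using assms by (intro mult_left_mono) auto
  have "0 < (dd^3 * H^3) * (dd^3 * jj^3)" using assms by (intro mult_pos_pos) auto
  then have "jj / (dd^3 * H^3) \<le> jj / (dd^3 * jj^3)" using divide_left_mono[OF le, of jj] assms by simp
  also have "\<dots> = 1 / (dd * (jj * dd)^2)" using assms by (simp add: field_simps power2_eq_square power3_eq_cube)
  finally show ?thesis using assms by simp
qed

lemma poly_bound:
  fixes N Q R :: real
  assumes "0 \<le> N" "N \<le> R * Q" "0 \<le> Q"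
  shows "3*N^2 + 3*N*Q + Q^2 \<le> (3*R^2 + 3*R + 1) * Q^2" and "2*N + Q \<le> (2*R+1) * Q"
proof -
  have "N^2 \<le> (R*Q)^2" using assms by (intro power_mono) auto
  moreover have "N*Q \<le> (R*Q)*Q" using assms by (intro mult_right_mono) auto
  ultimately show "3*N^2 + 3*N*Q + Q^2 \<le> (3*R^2 + 3*R + 1) * Q^2"
    by (simp add: power2_eq_square algebra_simps)
  show "2*N + Q \<le> (2*R+1) * Q" using assms by (simp add: algebra_simps)
qed

lemma rep:
  assumes a: "\<alpha> \<in> PP" and b: "\<beta> \<in> GG"
  shows "repetition_property tdist (\<lambda>n. \<alpha> * (real n)^3 + \<beta> * (real n)^2)"
  unfolding repetition_property_def
proof (intro allI impI)
  fix \<epsilon> :: real and r :: nat assume eps: "\<epsilon> > 0" and r: "r \<ge> 1"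
  obtain D where D: "\<forall>d\<ge>D. \<exists>j. 1 \<le> j \<and> j \<le> JJ d \<and>
     (\<exists>p::int. \<bar>real j * real d * \<beta> - of_int p\<bar> < cc d / real j)"
    using b unfolding GG_def by blast
  define K where "K = 3 * (real r)^2 + 5 * real r + 2"
  have "0 \<le> (real r)^2" "0 \<le> real r" by auto
  then have Kpos: "K > 0" unfolding K_def by linarith
  define M where "M = nat \<lceil>K/\<epsilon>\<rceil> + 1"
  have M: "real M > K/\<epsilon>" unfolding M_def by linarith
  obtain d where d: "d \<ge> max D M" "d \<ge> 1" and "\<exists>p::int. \<bar>real d * \<alpha> - of_int p\<bar> < hh d"
    using a unfolding PP_def by blast
  then obtain p :: int where p: "\<bar>real d * \<alpha> - of_int p\<bar> < hh d" by blast
  obtain j p' where j: "1 \<le> j" "j \<le> JJ d" and p': "\<bar>real j * real d * \<beta> - of_int p'\<bar> < cc d / real j"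
    using D d by auto
  define q where "q = j * d"
  have q1: "q \<ge> 1" using j d unfolding q_def by (simp add: Suc_le_eq)
  define Q where "Q = real q"
  define jj where "jj = real j"
  define dd where "dd = real d"
  define R where "R = real r"
  have jj1: "jj \<ge> 1" using j unfolding jj_def by simp
  have dd1: "dd \<ge> 1" using d unfolding dd_def by simp
  have Qeq: "Q = jj * dd" unfolding Q_def q_def jj_def dd_def by simp
  have Qpos: "Q > 0" using jj1 dd1 Qeq by simp
  define \<delta> where "\<delta> = Q * \<alpha> - jj * of_int p"
  define \<eta> where "\<eta> = Q * \<beta> - of_int p'"
  have \<delta>b: "\<bar>\<delta>\<bar> \<le> 1 / (dd * Q^2)"
  proof -
    have "\<delta> = jj * (real d * \<alpha> - of_int p)" unfolding \<delta>_def Qeq dd_def by (simp add: algebra_simps)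
    then have "\<bar>\<delta>\<bar> = jj * \<bar>real d * \<alpha> - of_int p\<bar>" using jj1 by (simp add: abs_mult)
    also have "\<dots> \<le> jj * hh d" using p jj1 by (intro mult_left_mono) auto
    also have "\<dots> = jj / (dd^3 * (real (JJ d) + 1)^3)" unfolding hh_def dd_def by simp
    finally have "\<bar>\<delta>\<bar> \<le> jj / (dd^3 * (real (JJ d) + 1)^3)" .
    moreover have "jj \<le> real (JJ d) + 1" using j unfolding jj_def by simp
    ultimately have "\<bar>\<delta>\<bar> \<le> 1 / (dd * (jj * dd)^2)" using alpha_bound jj1 dd1 by blast
    then show ?thesis unfolding Qeq .
  qed
  have \<eta>b: "\<bar>\<eta>\<bar> \<le> 1 / (dd * Q)"
  proof -
    have "\<eta> = real j * real d * \<beta> - of_int p'" unfolding \<eta>_def Q_def q_def by simp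
    then have "\<bar>\<eta>\<bar> < cc d / real j" using p' by simp
    also have "cc d / real j = 1 / (dd * Q)" unfolding cc_def Qeq jj_def dd_def
      using jj1 dd1 unfolding jj_def dd_def by (simp add: power2_eq_square field_simps)
    finally show ?thesis by simp
  qed
  show "\<exists>q\<ge>1. \<forall>n\<le>r * q. tdist (\<alpha> * (real n)^3 + \<beta> * (real n)^2)
          (\<alpha> * (real (n + q))^3 + \<beta> * (real (n + q))^2) < \<epsilon>"
  proof (intro exI[of _ q] conjI allI impI q1)
    fix n assume n: "n \<le> r * q"
    define N where "N = real n"
    have N0: "N \<ge> 0" unfolding N_def by simp
    have NR: "N \<le> R * Q" unfolding N_def R_def Q_def using n by (metis of_nat_le_iff of_nat_mult)
    define z :: int where "z = -(int j * p * (3*int n^2 + 3*int n*int q + int q^2) + p' * (2*int n + int q))"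
    have zr: "of_int z = -(jj * of_int p * (3*N^2 + 3*N*Q + Q^2) + of_int p' * (2*N + Q))"
      unfolding z_def jj_def N_def Q_def by simp
    have ident: "(\<alpha> * (real n)^3 + \<beta> * (real n)^2) - (\<alpha> * (real (n + q))^3 + \<beta> * (real (n + q))^2) - of_int z
        = -(\<delta> * (3*N^2 + 3*N*Q + Q^2) + \<eta> * (2*N + Q))"
      unfolding zr \<delta>_def \<eta>_def N_def Q_def
      by (simp add: power2_eq_square power3_eq_cube algebra_simps)
    have "tdist (\<alpha> * (real n)^3 + \<beta> * (real n)^2) (\<alpha> * (real (n + q))^3 + \<beta> * (real (n + q))^2)
        \<le> \<bar>\<delta> * (3*N^2 + 3*N*Q + Q^2) + \<eta> * (2*N + Q)\<bar>"
      unfolding tdist_def using tnorm_le[of _ z] ident by (metis abs_minus_cancel)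
    also have "\<dots> \<le> \<bar>\<delta>\<bar> * (3*N^2 + 3*N*Q + Q^2) + \<bar>\<eta>\<bar> * (2*N + Q)"
      using N0 Qpos by (simp add: abs_triangle_ineq[THEN order_trans] abs_mult)
    also have "\<dots> \<le> (1 / (dd * Q^2)) * ((3*R^2 + 3*R + 1) * Q^2) + (1 / (dd * Q)) * ((2*R+1) * Q)"
      using poly_bound[OF N0 NR] Qpos N0 \<delta>b \<eta>b dd1
      by (intro add_mono mult_mono) auto
    also have "\<dots> = K / dd" unfolding K_def R_def using Qpos dd1
      by (simp add: field_simps power2_eq_square)
    also have "\<dots> < \<epsilon>"
    proof -
      have "real M \<le> dd" using d unfolding dd_def by simp
      then have "K/\<epsilon> < dd" using M by linarith
      then show ?thesis using eps dd1 by (simp add: field_simps)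
    qed
    finally show "tdist (\<alpha> * (real n)^3 + \<beta> * (real n)^2) (\<alpha> * (real (n + q))^3 + \<beta> * (real (n + q))^2) < \<epsilon>" .
  qed
qed

theorem theorem3p6:
  shows "\<exists>P0 G :: real set.
           periodic_set P0 \<and> residual P0 \<and>
           periodic_set G \<and> (UNIV - G) \<in> null_sets lebesgue \<and>
           (\<forall>\<alpha>\<in>P0. \<forall>\<beta>\<in>G.
              repetition_property tdist (\<lambda>n. \<alpha> * (real n)^3 + \<beta> * (real n)^2))"
  using periodic_PP residual_PP periodic_GG GG_null rep by blast

end
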